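(* Let $I_1,\dots,I_n$ be i.i.d. Bernoulli random variables with $\Pr[I_i=1]=p=1-q$, $0<q<1$, let $I_{n+1}=\prod_{j=1}^n(1-I_j)$, and let $P_i=I_i/\sum_{j=1}^{n+1}I_j$ for $i=1,\dots,n+1$. Let $\pi_1,\dots,\pi_{n+1}\ge0$ with $\pi_i>0$ for some $i\le n$, and let $W_i=\big(\sum_{j=1}^{n+1}\pi_j\big)P_i$ for $i=1,\dots,n+1$ (homogeneous tontine with active administrator). Then $E[W_i]=\pi_i$ for all $i=1,\dots,n+1$ if and only if $$\pi_i=\frac1n\sum_{j=1}^n\pi_j\ \ (i=1,\dots,n)\qquad\text{and}\qquad \pi_{n+1}=\frac{q^n}{1-q^n}\sum_{j=1}^n\pi_j,$$ i.e. all participants invest the same amount $\pi$ and $\pi_{n+1}=\frac{nq^n}{1-q^n}\pi$. *)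

theory Defs
  imports "HOL-Probability.Probability"
begin

text \<open>Joint law of i.i.d. Bernoulli(p) indicators I_1..I_n, with outcome
  \<omega> i = True meaning I_i = 1 (participant i survives).\<close>
definition bern_iid :: "nat \<Rightarrow> real \<Rightarrow> (nat \<Rightarrow> bool) pmf" where
  "bern_iid n p = Pi_pmf {1..n} False (\<lambda>_. bernoulli_pmf p)"

definition tontine_I :: "nat \<Rightarrow> (nat \<Rightarrow> bool) \<Rightarrow> nat \<Rightarrow> real" where
  "tontine_I n \<omega> i =
     (if i = n + 1 then (\<Prod>j\<in>{1..n}. 1 - of_bool (\<omega> j)) else of_bool (\<omega> i))"

definition tontine_P :: "nat \<Rightarrow> (nat \<Rightarrow> bool) \<Rightarrow> nat \<Rightarrow> real" where
  "tontine_P n \<omega> i = tontine_I n \<omega> i / (\<Sum>j\<in>{1..n+1}. tontine_I n \<omega> j)"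

definition tontine_W :: "nat \<Rightarrow> (nat \<Rightarrow> real) \<Rightarrow> (nat \<Rightarrow> bool) \<Rightarrow> nat \<Rightarrow> real" where
  "tontine_W n \<pi> \<omega> i = (\<Sum>j\<in>{1..n+1}. \<pi> j) * tontine_P n \<omega> i"

end

theory Submission
  imports Defs
begin

lemma fin_set: "finite (set_pmf (bern_iid n p))"
proof -
  have "set_pmf (bern_iid n p) \<subseteq> PiE_dflt {1..n} False (\<lambda>_. UNIV)"
    unfolding bern_iid_def using set_Pi_pmf_subset[of "{1..n}" False] by (auto simp: PiE_dflt_def)
  moreover have "finite (PiE_dflt {1..n} False (\<lambda>_. UNIV :: bool set))" by auto
  ultimately show ?thesis by (rule finite_subset)
qed

lemma integ: "integrable (measure_pmf (bern_iid n p)) (f :: _ \<Rightarrow> real)"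
  by (rule integrable_measure_pmf_finite[OF fin_set])

lemma sumI: "(\<Sum>j\<in>{1..n+1}. tontine_I n \<omega> j) =
   (\<Sum>j\<in>{1..n}. of_bool (\<omega> j)) + (\<Prod>j\<in>{1..n}. 1 - of_bool (\<omega> j))"
proof -
  have "(\<Sum>j\<in>{1..n+1}. tontine_I n \<omega> j) = (\<Sum>j\<in>{1..n}. tontine_I n \<omega> j) + tontine_I n \<omega> (n+1)"
    by simp
  also have "(\<Sum>j\<in>{1..n}. tontine_I n \<omega> j) = (\<Sum>j\<in>{1..n}. of_bool (\<omega> j))"
    by (rule sum.cong) (auto simp: tontine_I_def)
  finally show ?thesis by (simp add: tontine_I_def)
qed

lemma prod_ind0: "finite A \<Longrightarrow> (\<Prod>j\<in>A. 1 - of_bool (\<omega> j) :: real) = of_bool (\<forall>j\<in>A. \<not> \<omega> j)"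
  by (induction A rule: finite_induct) auto
lemmas prod_ind = prod_ind0[OF finite_atLeastAtMost]

lemma D_pos: "(\<Sum>j\<in>{1..n+1}. tontine_I n \<omega> j) \<ge> 1"
proof (cases "\<forall>j\<in>{1..n}. \<not> \<omega> j")
  case True
  then show ?thesis unfolding sumI prod_ind by (simp add: sum_nonneg)
next
  case False
  then obtain k where k: "k \<in> {1..n}" "\<omega> k" by auto
  have "(1::real) = of_bool (\<omega> k)" using k by simp
  also have "\<dots> \<le> (\<Sum>j\<in>{1..n}. of_bool (\<omega> j))"
    by (rule member_le_sum) (use k in auto)
  finally have h: "1 \<le> (\<Sum>j\<in>{1..n}. of_bool (\<omega> j) :: real)" .
  have "0 \<le> (of_bool (\<forall>j\<in>{1..n}. \<not> \<omega> j) :: real)" by simp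
  with h show ?thesis unfolding sumI prod_ind by linarith
qed

lemma sumP: "(\<Sum>i\<in>{1..n+1}. tontine_P n \<omega> i) = 1"
proof -
  have "(\<Sum>i\<in>{1..n+1}. tontine_P n \<omega> i) = (\<Sum>i\<in>{1..n+1}. tontine_I n \<omega> i) / (\<Sum>j\<in>{1..n+1}. tontine_I n \<omega> j)"
    unfolding tontine_P_def by (simp only: sum_divide_distrib)
  also have "\<dots> = 1" using D_pos[of n \<omega>] by (intro divide_self) linarith
  finally show ?thesis .
qed

lemma Plast: "tontine_P n \<omega> (n+1) = (\<Prod>j\<in>{1..n}. 1 - of_bool (\<omega> j))"
  unfolding tontine_P_def by (auto simp: sumI prod_ind tontine_I_def)

lemma EPlast: assumes "0 \<le> p" "p \<le> 1"
  shows "measure_pmf.expectation (bern_iid n p) (\<lambda>\<omega>. tontine_P n \<omega> (n+1)) = (1-p)^n"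
proof -
  have "measure_pmf.expectation (bern_iid n p) (\<lambda>\<omega>. tontine_P n \<omega> (n+1)) =
     measure_pmf.expectation (Pi_pmf {1..n} False (\<lambda>_. bernoulli_pmf p)) (\<lambda>\<omega>. \<Prod>j\<in>{1..n}. (\<lambda>j b. 1 - of_bool b) j (\<omega> j))"
    by (simp only: Plast bern_iid_def)
  also have "\<dots> = (\<Prod>j\<in>{1..n}. measure_pmf.expectation (bernoulli_pmf p) (\<lambda>b. 1 - of_bool b))"
    by (rule expectation_prod_Pi_pmf) (auto intro: integrable_measure_pmf_finite)
  also have "\<dots> = (1-p)^n" using assms by (simp add: integral_bernoulli_pmf)
  finally show ?thesis .
qed

lemma D_perm:
  assumes "bij_betw h {1..n} {1..n}"
  shows "(\<Sum>j\<in>{1..n+1}. tontine_I n (\<omega> \<circ> h) j) = (\<Sum>j\<in>{1..n+1}. tontine_I n \<omega> j)"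
proof -
  have 1: "(\<Sum>j\<in>{1..n}. of_bool ((\<omega> \<circ> h) j) :: real) = (\<Sum>j\<in>{1..n}. of_bool (\<omega> j))"
    using sum.reindex_bij_betw[OF assms, of "\<lambda>j. of_bool (\<omega> j) :: real"] by simp
  have 2: "(\<Prod>j\<in>{1..n}. 1 - of_bool ((\<omega> \<circ> h) j) :: real) = (\<Prod>j\<in>{1..n}. 1 - of_bool (\<omega> j))"
    using prod.reindex_bij_betw[OF assms, of "\<lambda>j. 1 - of_bool (\<omega> j) :: real"] by simp
  show ?thesis unfolding sumI 1 2 ..
qed

lemma EP_sym:
  assumes i: "i \<in> {1..n}"
  shows "measure_pmf.expectation (bern_iid n p) (\<lambda>\<omega>. tontine_P n \<omega> i) =
         measure_pmf.expectation (bern_iid n p) (\<lambda>\<omega>. tontine_P n \<omega> 1)"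
proof -
  define h where "h = (\<lambda>j::nat. if j = i then 1 else if j = 1 then i else j)"
  have hh: "h (h j) = j" for j unfolding h_def by auto
  have bij: "bij_betw h {1..n} {1..n}"
    by (rule bij_betwI[where g = h]) (use i in \<open>auto simp: h_def hh\<close>)
  have out: "\<And>x. x \<notin> {1..n} \<Longrightarrow> h x \<notin> {1..n}" using i by (auto simp: h_def)
  have eq: "bern_iid n p = map_pmf (\<lambda>g. g \<circ> h) (bern_iid n p)"
    unfolding bern_iid_def by (rule Pi_pmf_bij_betw[OF _ bij out]) simp
  have pt: "tontine_P n (\<omega> \<circ> h) 1 = tontine_P n \<omega> i" for \<omega>
  proof -
    have "tontine_I n (\<omega> \<circ> h) 1 = tontine_I n \<omega> i" using i by (auto simp: tontine_I_def h_def)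
    then show ?thesis unfolding tontine_P_def D_perm[OF bij] by simp
  qed
  have "measure_pmf.expectation (bern_iid n p) (\<lambda>\<omega>. tontine_P n \<omega> 1) =
        measure_pmf.expectation (map_pmf (\<lambda>g. g \<circ> h) (bern_iid n p)) (\<lambda>\<omega>. tontine_P n \<omega> 1)"
    using eq by simp
  also have "\<dots> = measure_pmf.expectation (bern_iid n p) (\<lambda>\<omega>. tontine_P n (\<omega> \<circ> h) 1)"
    by simp
  also have "\<dots> = measure_pmf.expectation (bern_iid n p) (\<lambda>\<omega>. tontine_P n \<omega> i)"
    by (simp only: pt)
  finally show ?thesis ..
qed

theorem mainTheorem12:
  fixes n :: nat and p q :: real and \<pi> :: "nat \<Rightarrow> real"
  assumes q_pos: "0 < q" and q_lt1: "q < 1" and p_def: "p = 1 - q"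
    and pi_nonneg: "\<forall>i\<in>{1..n+1}. \<pi> i \<ge> 0"
    and pi_pos: "\<exists>i\<in>{1..n}. \<pi> i > 0"
  shows "(\<forall>i\<in>{1..n+1}.
            measure_pmf.expectation (bern_iid n p) (\<lambda>\<omega>. tontine_W n \<pi> \<omega> i) = \<pi> i)
         \<longleftrightarrow>
         ((\<forall>i\<in>{1..n}. \<pi> i = (\<Sum>j\<in>{1..n}. \<pi> j) / real n) \<and>
          \<pi> (n + 1) = q ^ n / (1 - q ^ n) * (\<Sum>j\<in>{1..n}. \<pi> j))"
proof -
  define M where "M = bern_iid n p"
  define c where "c = measure_pmf.expectation M (\<lambda>\<omega>. tontine_P n \<omega> 1)"
  define T where "T = (\<Sum>j\<in>{1..n}. \<pi> j)"
  define S where "S = (\<Sum>j\<in>{1..n+1}. \<pi> j)"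
  define Q where "Q = q ^ n"
  have n1: "n \<ge> 1" using pi_pos by auto
  have Q: "0 < Q" "Q < 1" unfolding Q_def using q_pos q_lt1 n1
    by (auto simp: power_less_one_iff)
  have ST: "S = T + \<pi> (n+1)" unfolding S_def T_def by simp
  have Ei: "measure_pmf.expectation M (\<lambda>\<omega>. tontine_P n \<omega> i) = c" if "i \<in> {1..n}" for i
    unfolding M_def c_def by (rule EP_sym[OF that])
  have El: "measure_pmf.expectation M (\<lambda>\<omega>. tontine_P n \<omega> (n+1)) = Q"
    unfolding M_def Q_def using EPlast[of p n] p_def q_pos q_lt1 by simp
  have "1 = measure_pmf.expectation M (\<lambda>\<omega>. \<Sum>i\<in>{1..n+1}. tontine_P n \<omega> i)"
    by (simp only: sumP) simp
  also have "\<dots> = (\<Sum>i\<in>{1..n+1}. measure_pmf.expectation M (\<lambda>\<omega>. tontine_P n \<omega> i))"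
    unfolding M_def by (rule Bochner_Integration.integral_sum) (rule integ)
  also have "\<dots> = (\<Sum>i\<in>{1..n}. measure_pmf.expectation M (\<lambda>\<omega>. tontine_P n \<omega> i)) + Q"
    using El by simp
  also have "\<dots> = n * c + Q" using Ei by simp
  finally have cn: "n * c = 1 - Q" by simp
  have EW: "measure_pmf.expectation M (\<lambda>\<omega>. tontine_W n \<pi> \<omega> i) =
            S * measure_pmf.expectation M (\<lambda>\<omega>. tontine_P n \<omega> i)" for i
    unfolding tontine_W_def S_def by (rule integral_mult_right_zero)
  have "(\<forall>i\<in>{1..n+1}. measure_pmf.expectation M (\<lambda>\<omega>. tontine_W n \<pi> \<omega> i) = \<pi> i)
     \<longleftrightarrow> (\<forall>i\<in>{1..n}. S * c = \<pi> i) \<and> S * Q = \<pi> (n+1)"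
  proof -
    have sp: "(\<forall>i\<in>{1..n+1}. X i) \<longleftrightarrow> (\<forall>i\<in>{1..n}. X i) \<and> X (n+1)" for X :: "nat \<Rightarrow> bool"
      by (auto simp: le_Suc_eq) (metis Suc_le_mono atLeastAtMost_iff le0 order_refl)
    have "(\<forall>i\<in>{1..n}. S * measure_pmf.expectation M (\<lambda>\<omega>. tontine_P n \<omega> i) = \<pi> i) \<longleftrightarrow> (\<forall>i\<in>{1..n}. S * c = \<pi> i)"
      using Ei by simp
    then show ?thesis unfolding sp EW El by simp
  qed
  also have "\<dots> \<longleftrightarrow> (\<forall>i\<in>{1..n}. \<pi> i = T / real n) \<and> \<pi> (n + 1) = Q / (1 - Q) * T"
  proof
    assume A: "(\<forall>i\<in>{1..n}. S * c = \<pi> i) \<and> S * Q = \<pi> (n+1)"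
    have "T = (\<Sum>j\<in>{1..n}. S * c)" unfolding T_def using A by simp
    also have "\<dots> = S * (n * c)" by simp
    finally have hT: "T = S * (1 - Q)" unfolding cn .
    show "(\<forall>i\<in>{1..n}. \<pi> i = T / real n) \<and> \<pi> (n + 1) = Q / (1 - Q) * T"
    proof
      show "\<forall>i\<in>{1..n}. \<pi> i = T / real n" using A hT cn n1
        by (metis mult.left_commute nonzero_mult_div_cancel_left of_nat_0_eq_iff not_one_le_zero)
      have "Q / (1 - Q) * T = S * Q" unfolding hT using Q by (simp add: field_simps)
      then show "\<pi> (n + 1) = Q / (1 - Q) * T" using A by simp
    qed
  next
    assume B: "(\<forall>i\<in>{1..n}. \<pi> i = T / real n) \<and> \<pi> (n + 1) = Q / (1 - Q) * T"
    have hS: "S = T / (1 - Q)" using B ST Q by (simp add: field_simps)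
    have hc: "c = (1 - Q) / n" using cn n1 by (simp add: field_simps)
    have Sc: "S * c = T / n" unfolding hS hc using Q n1 by (simp add: field_simps)
    have SQ: "S * Q = Q / (1 - Q) * T" unfolding hS using Q by (simp add: field_simps)
    show "(\<forall>i\<in>{1..n}. S * c = \<pi> i) \<and> S * Q = \<pi> (n+1)"
      using B Sc SQ by simp
  qed
  finally show ?thesis unfolding M_def T_def Q_def .
qed

end
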